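(* Consider the two-point dormancy model described in the context and assume $\lim_{N\to\infty}N\omega_N=0$. Then $\lim_{N\to\infty}c_N=0$. Moreover, if $\lambda_NT_N=\beta\log(\kappa N)$ for constants $\kappa,\beta>0$, then as $N\to\infty$: \begin{enumerate} \item if $\beta>1$, $c_N\sim N\omega_N$; \item if $\beta=1$, $c_N\sim N\omega_N\,E[Y_\kappa^2]$, where $Y_\kappa$ is a $[0,1]$-valued random variable with $\mathbb{P}(Y_\kappa>x)=e^{-\frac{x}{\kappa(1-x)}}$; \item if $\beta<1$, $c_N\sim2\kappa^{2\beta}\omega_NN^{2\beta-1}$. \end{enumerate}
   Context: Two-point dormancy model: for each $N$, the population of $N$ individuals evolves in days of length $T_N$ with no summer. Individual $i$ wakes up at time $0$ with probability $\omega_N$ and at time $T_N$ with probability $1-\omega_N$, independently; after waking it and its descendants reproduce as a Yule process with rate $\lambda_N$ until time $T_N$. Equivalently, the number of descendants at time $T_N$ is $X_{i,N}=b_{i,N}G_{i,N}+(1-b_{i,N})$, where $(b_{i,N})_i$ are i.i.d. Bernoulli$(\omega_N)$ and $(G_{i,N})_i$ are i.i.d. geometric on $\{1,2,\dots\}$ with parameter $e^{-\lambda_NT_N}$ (i.e. $\mathbb{P}(G>k)=(1-e^{-\lambda_NT_N})^k$), independent of the $b$'s. With $S_N=\sum_iX_{i,N}$, $N$ of the $S_N$ individuals are sampled uniformly without replacement to form the next day's population; $\nu_{i,N}$ is the number sampled descended from $i$. $c_N=E[(\nu_{1,N})_2]/(N-1)$ with $(x)_k$ the falling factorial. *)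

theory Defs
  imports "HOL-Probability.Probability"
begin

definition ffact2 :: "nat \<Rightarrow> real" where
  "ffact2 v = real v * (real v - 1)"

text \<open>Law of the number of descendants X = b G + (1 - b) at time T_N of one individual:
  b ~ Bernoulli(omega), G geometric on {1,2,...} with P(G > k) = (1 - e^{-lam T})^k,
  i.e. G = 1 + (geometric_pmf with success parameter e^{-lam T}).\<close>
definition X_pmf :: "real \<Rightarrow> real \<Rightarrow> real \<Rightarrow> nat pmf" where
  "X_pmf omega lam T =
     bind_pmf (bernoulli_pmf omega)
       (\<lambda>b. if b then map_pmf Suc (geometric_pmf (exp (- (lam * T)))) else return_pmf 1)"

definition Xvec_pmf :: "real \<Rightarrow> real \<Rightarrow> real \<Rightarrow> nat \<Rightarrow> (nat \<Rightarrow> nat) pmf" where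
  "Xvec_pmf omega lam T N = Pi_pmf {..<N} 0 (\<lambda>_. X_pmf omega lam T)"

text \<open>The S_N individuals present at time T_N: (i, j) is the j-th descendant of individual i.\<close>
definition individuals :: "(nat \<Rightarrow> nat) \<Rightarrow> nat \<Rightarrow> (nat \<times> nat) set" where
  "individuals X N = {(i, j). i < N \<and> j < X i}"

text \<open>Law of nu_{1,N}: sample N of the S_N individuals uniformly without replacement and
  count those descended from the first individual (index 0).\<close>
definition nu1_pmf :: "real \<Rightarrow> real \<Rightarrow> real \<Rightarrow> nat \<Rightarrow> nat pmf" where
  "nu1_pmf omega lam T N =
     bind_pmf (Xvec_pmf omega lam T N)
       (\<lambda>X. map_pmf (\<lambda>A. card {p \<in> A. fst p = 0})
              (pmf_of_set {A. A \<subseteq> individuals X N \<and> card A = N}))"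

definition cN :: "(nat \<Rightarrow> real) \<Rightarrow> (nat \<Rightarrow> real) \<Rightarrow> (nat \<Rightarrow> real) \<Rightarrow> nat \<Rightarrow> real" where
  "cN omega lam T N =
     measure_pmf.expectation (nu1_pmf (omega N) (lam N) (T N) N) ffact2 / (real N - 1)"

end

theory Submission
  imports Defs "HOL-Real_Asymp.Real_Asymp"
begin


lemma card_offdiag:
  assumes "finite C"
  shows "card {(x,y). x\<in>C \<and> y\<in>C \<and> x \<noteq> y} = card C * (card C - 1)"
proof -
  have e: "{(x,y). x\<in>C \<and> y\<in>C \<and> x \<noteq> y} = C \<times> C - (\<lambda>x. (x,x)) ` C" by auto
  have "card ((\<lambda>x. (x,x)) ` C) = card C" by (rule card_image) (auto simp: inj_on_def)
  moreover have "card (C \<times> C - (\<lambda>x. (x,x)) ` C) = card (C \<times> C) - card ((\<lambda>x. (x,x)) ` C)"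
    by (rule card_Diff_subset) (use assms in auto)
  ultimately show ?thesis unfolding e by (simp add: card_cartesian_product diff_mult_distrib2)
qed

lemma ffact2_card:
  assumes "finite C"
  shows "ffact2 (card C) = real (card {(x,y). x\<in>C \<and> y\<in>C \<and> x \<noteq> y})"
  using assms by (cases "card C") (simp_all add: card_offdiag ffact2_def algebra_simps)

lemma card_subsets_containing:
  assumes U: "finite U" and xy: "x \<in> U" "y \<in> U" "x \<noteq> y" and n: "2 \<le> n"
  shows "card {A. (A \<subseteq> U \<and> card A = n) \<and> x \<in> A \<and> y \<in> A} = (card U - 2) choose (n - 2)"
proof -
  have "bij_betw (\<lambda>A. A - {x,y}) {A. (A \<subseteq> U \<and> card A = n) \<and> x \<in> A \<and> y \<in> A}
          {A'. A' \<subseteq> U - {x,y} \<and> card A' = n - 2}"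
  proof (rule bij_betw_byWitness[where f'="\<lambda>A'. A' \<union> {x,y}"])
    show "\<forall>a\<in>{A. (A \<subseteq> U \<and> card A = n) \<and> x \<in> A \<and> y \<in> A}. a - {x, y} \<union> {x, y} = a" by auto
    show "\<forall>a'\<in>{A'. A' \<subseteq> U - {x, y} \<and> card A' = n - 2}. a' \<union> {x, y} - {x, y} = a'" by auto
    show "(\<lambda>A. A - {x, y}) ` {A. (A \<subseteq> U \<and> card A = n) \<and> x \<in> A \<and> y \<in> A}
           \<subseteq> {A'. A' \<subseteq> U - {x, y} \<and> card A' = n - 2}"
    proof (rule image_subsetI)
      fix A assume "A \<in> {A. (A \<subseteq> U \<and> card A = n) \<and> x \<in> A \<and> y \<in> A}"
      then have A: "A \<subseteq> U" "x \<in> A" "y \<in> A" "card A = n" by auto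
      have "finite A" using A U finite_subset by blast
      then have "card (A - {x,y}) = card A - card {x,y}" using A by (intro card_Diff_subset) auto
      then show "A - {x, y} \<in> {A'. A' \<subseteq> U - {x, y} \<and> card A' = n - 2}" using A xy by auto
    qed
    show "(\<lambda>A'. A' \<union> {x, y}) ` {A'. A' \<subseteq> U - {x, y} \<and> card A' = n - 2}
           \<subseteq> {A. (A \<subseteq> U \<and> card A = n) \<and> x \<in> A \<and> y \<in> A}"
    proof (rule image_subsetI)
      fix A' assume "A' \<in> {A'. A' \<subseteq> U - {x, y} \<and> card A' = n - 2}"
      then have A': "A' \<subseteq> U - {x,y}" "card A' = n - 2" by auto
      have "finite A'" using A' U finite_subset by blast
      then have "card (A' \<union> {x,y}) = card A' + card {x,y}" using A' by (intro card_Un_disjoint) auto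
      then show "A' \<union> {x, y} \<in> {A. (A \<subseteq> U \<and> card A = n) \<and> x \<in> A \<and> y \<in> A}"
        using A' xy n by auto
    qed
  qed
  then have "card {A. (A \<subseteq> U \<and> card A = n) \<and> x \<in> A \<and> y \<in> A} = card {A'. A' \<subseteq> U - {x,y} \<and> card A' = n - 2}"
    by (rule bij_betw_same_card)
  also have "\<dots> = card (U - {x,y}) choose (n - 2)" by (rule n_subsets) (use U in auto)
  also have "card (U - {x,y}) = card U - 2" using U xy by (subst card_Diff_subset) auto
  finally show ?thesis .
qed

lemma choose_identity:
  assumes "2 \<le> n" "n \<le> S"
  shows "(S choose n) * (n * (n - 1)) = S * (S - 1) * ((S - 2) choose (n - 2))"
proof -
  define m where "m = S - 2"
  define j where "j = n - 2"
  have S: "S = Suc (Suc m)" and n: "n = Suc (Suc j)" using assms by (auto simp: m_def j_def)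
  have 1: "Suc (Suc m) * (Suc m choose Suc j) = (Suc (Suc m) choose Suc (Suc j)) * Suc (Suc j)"
    by (rule Suc_times_binomial_eq)
  have 2: "Suc m * (m choose j) = (Suc m choose Suc j) * Suc j"
    by (rule Suc_times_binomial_eq)
  have "(S choose n) * (n * (n - 1)) = ((Suc (Suc m) choose Suc (Suc j)) * Suc (Suc j)) * Suc j"
    by (simp del: binomial_Suc_Suc add: S n algebra_simps)
  also have "\<dots> = Suc (Suc m) * ((Suc m choose Suc j) * Suc j)" by (simp only: 1[symmetric] mult.assoc)
  also have "\<dots> = Suc (Suc m) * (Suc m * (m choose j))" by (simp only: 2)
  finally show ?thesis by (simp del: binomial_Suc_Suc add: S n algebra_simps)
qed

lemma hyper:
  assumes U: "finite U" and B: "B \<subseteq> U" and n: "2 \<le> n" "n \<le> card U"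
  shows "measure_pmf.expectation (pmf_of_set {A. A \<subseteq> U \<and> card A = n}) (\<lambda>A. ffact2 (card (A \<inter> B)))
         = ffact2 (card B) * (real n * (real n - 1)) / (real (card U) * (real (card U) - 1))"
proof -
  define F where "F = {A. A \<subseteq> U \<and> card A = n}"
  define D where "D = {(x,y). x\<in>B \<and> y\<in>B \<and> x \<noteq> y}"
  have finF: "finite F" unfolding F_def by (rule finite_subset[of _ "Pow U"]) (use U in auto)
  obtain T where "T \<subseteq> U" "card T = n" using obtain_subset_with_card_n[OF n(2)] by blast
  then have neF: "F \<noteq> {}" unfolding F_def by auto
  have finB: "finite B" using U B finite_subset by blast
  have finD: "finite D" unfolding D_def by (rule finite_subset[of _ "B \<times> B"]) (use finB in auto)
  have cardF: "card F = card U choose n" unfolding F_def by (rule n_subsets[OF U])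
  have 1: "ffact2 (card (A \<inter> B)) = (\<Sum>d\<in>D. if fst d \<in> A \<and> snd d \<in> A then 1 else 0)" for A
  proof -
    have fin: "finite (A \<inter> B)" using finB by simp
    have "{(x,y). x\<in>A \<inter> B \<and> y\<in>A \<inter> B \<and> x \<noteq> y} = {d\<in>D. fst d \<in> A \<and> snd d \<in> A}"
      unfolding D_def by auto
    then have "ffact2 (card (A \<inter> B)) = real (card {d\<in>D. fst d \<in> A \<and> snd d \<in> A})"
      using ffact2_card[OF fin] by simp
    also have "\<dots> = (\<Sum>d\<in>{d\<in>D. fst d \<in> A \<and> snd d \<in> A}. 1)" by simp
    also have "\<dots> = (\<Sum>d\<in>D. if fst d \<in> A \<and> snd d \<in> A then 1 else 0)"
      by (rule sum.inter_filter[OF finD])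
    finally show ?thesis .
  qed
  have 2: "(\<Sum>A\<in>F. if fst d \<in> A \<and> snd d \<in> A then 1 else 0) = real ((card U - 2) choose (n - 2))"
    if "d \<in> D" for d
  proof -
    obtain x y where d: "d = (x,y)" "x \<in> U" "y \<in> U" "x \<noteq> y" using \<open>d \<in> D\<close> B unfolding D_def by auto
    have "(\<Sum>A\<in>F. if fst d \<in> A \<and> snd d \<in> A then 1 else 0) = (\<Sum>A\<in>{A\<in>F. x \<in> A \<and> y \<in> A}. 1::real)"
      by (subst sum.inter_filter[OF finF]) (simp add: d)
    also have "\<dots> = real (card {A. (A \<subseteq> U \<and> card A = n) \<and> x \<in> A \<and> y \<in> A})"
      by (simp add: F_def)
    also have "\<dots> = real ((card U - 2) choose (n - 2))"
      using card_subsets_containing[OF U d(2-4) n(1)] by simp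
    finally show ?thesis .
  qed
  have "(\<Sum>A\<in>F. ffact2 (card (A \<inter> B))) = (\<Sum>A\<in>F. \<Sum>d\<in>D. if fst d \<in> A \<and> snd d \<in> A then 1 else 0)"
    by (simp add: 1)
  also have "\<dots> = (\<Sum>d\<in>D. \<Sum>A\<in>F. if fst d \<in> A \<and> snd d \<in> A then 1 else 0)"
    by (rule sum.swap)
  also have "\<dots> = (\<Sum>d\<in>D. real ((card U - 2) choose (n - 2)))"
    by (rule sum.cong) (simp_all add: 2)
  also have "\<dots> = real (card D) * real ((card U - 2) choose (n - 2))" by simp
  finally have sumF: "(\<Sum>A\<in>F. ffact2 (card (A \<inter> B))) = real (card D) * real ((card U - 2) choose (n - 2))" .
  have cD: "real (card D) = ffact2 (card B)" unfolding D_def using ffact2_card[OF finB] by simp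
  have ci: "real (card U choose n) * (real n * (real n - 1)) = real (card U) * (real (card U) - 1) * real ((card U - 2) choose (n - 2))"
  proof -
    have "real ((card U choose n) * (n * (n - 1))) = real (card U * (card U - 1) * ((card U - 2) choose (n - 2)))"
      using choose_identity[OF n] by simp
    then show ?thesis using n by (simp add: of_nat_diff)
  qed
  have pos: "real (card U choose n) > 0" using n by simp
  have Upos: "real (card U) * (real (card U) - 1) > 0" using n by simp
  have "measure_pmf.expectation (pmf_of_set F) (\<lambda>A. ffact2 (card (A \<inter> B))) = (\<Sum>A\<in>F. ffact2 (card (A \<inter> B))) / card F"
    by (rule integral_pmf_of_set[OF neF finF])
  also have "\<dots> = ffact2 (card B) * (real n * (real n - 1)) / (real (card U) * (real (card U) - 1))"
  proof -
    have c2: "real ((card U - 2) choose (n - 2)) = real (card U choose n) * (real n * (real n - 1)) / (real (card U) * (real (card U) - 1))"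
      by (subst eq_divide_eq) (use ci Upos n in \<open>simp add: mult.commute\<close>)
    show ?thesis unfolding sumF cardF cD c2 using pos by simp
  qed
  finally show ?thesis unfolding F_def .
qed



definition hh :: "nat \<Rightarrow> nat \<Rightarrow> real" where
  "hh N v = ffact2 v / ((real v + real N - 1) * (real v + real N - 2))"

lemma hh_bounds: assumes "2 \<le> N" shows "0 \<le> hh N v" "hh N v \<le> 1"
proof -
  have d: "0 \<le> (real v + real N - 1) * (real v + real N - 2)" using assms by auto
  have f: "0 \<le> ffact2 v" by (cases v) (auto simp: ffact2_def)
  show "0 \<le> hh N v" unfolding hh_def using d f by simp
  show "hh N v \<le> 1"
  proof (cases "v = 0")
    case True then show ?thesis by (simp add: hh_def ffact2_def)
  next
    case False
    then have "ffact2 v \<le> (real v + real N - 1) * (real v + real N - 2)"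
      using assms unfolding ffact2_def by (intro mult_mono) auto
    moreover have "0 < (real v + real N - 1) * (real v + real N - 2)" using assms False by auto
    ultimately show ?thesis unfolding hh_def by simp
  qed
qed

lemma hh_1 [simp]: "hh N 1 = 0" by (simp add: hh_def ffact2_def)
lemma hh_Suc0 [simp]: "hh N (Suc 0) = 0" by (simp add: hh_def ffact2_def)

lemma integrable_bounded_pmf:
  fixes f :: "'a \<Rightarrow> real"
  assumes "\<And>x. x \<in> set_pmf M \<Longrightarrow> \<bar>f x\<bar> \<le> B"
  shows "integrable (measure_pmf M) f"
  by (rule measure_pmf.integrable_const_bound[where B=B]) (use assms in \<open>auto simp: AE_measure_pmf_iff\<close>)

lemma expectation_bind_pmf_nonneg:
  fixes f :: "'b \<Rightarrow> real"
  assumes f: "\<And>y. 0 \<le> f y" and g: "\<And>x. 0 \<le> g x"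
    and int: "\<And>x. x \<in> set_pmf M \<Longrightarrow> integrable (measure_pmf (N x)) f"
    and eq: "\<And>x. x \<in> set_pmf M \<Longrightarrow> measure_pmf.expectation (N x) f = g x"
  shows "measure_pmf.expectation (bind_pmf M N) f = measure_pmf.expectation M g"
proof -
  have "measure_pmf.expectation (bind_pmf M N) f = enn2real (\<integral>\<^sup>+x. ennreal (f x) \<partial>measure_pmf (bind_pmf M N))"
    by (rule integral_eq_nn_integral) (use f in auto)
  also have "(\<integral>\<^sup>+x. ennreal (f x) \<partial>measure_pmf (bind_pmf M N)) = (\<integral>\<^sup>+x. \<integral>\<^sup>+y. ennreal (f y) \<partial>N x \<partial>M)"
    by simp
  also have "\<dots> = (\<integral>\<^sup>+x. ennreal (g x) \<partial>M)"
  proof (rule nn_integral_cong_AE)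
    show "AE x in measure_pmf M. (\<integral>\<^sup>+y. ennreal (f y) \<partial>N x) = ennreal (g x)"
    proof (rule AE_pmfI)
      fix x assume x: "x \<in> set_pmf M"
      show "(\<integral>\<^sup>+y. ennreal (f y) \<partial>N x) = ennreal (g x)"
        using nn_integral_eq_integral[OF int[OF x]] f eq[OF x] by simp
    qed
  qed
  also have "enn2real \<dots> = measure_pmf.expectation M g"
    by (rule integral_eq_nn_integral[symmetric]) (use g in auto)
  finally show ?thesis .
qed

lemma set_X_pmf: "x \<in> set_pmf (X_pmf w l t) \<Longrightarrow> 1 \<le> x"
  unfolding X_pmf_def by (auto split: if_splits)

lemma expectation_X_pmf:
  fixes f :: "nat \<Rightarrow> real"
  assumes w: "0 \<le> w" "w \<le> 1" and f: "\<And>y. 0 \<le> f y" "\<And>y. f y \<le> 1"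
  shows "measure_pmf.expectation (X_pmf w l t) f =
     w * measure_pmf.expectation (geometric_pmf (exp (- (l * t)))) (\<lambda>k. f (Suc k)) + (1 - w) * f 1"
proof -
  define G where "G = measure_pmf.expectation (geometric_pmf (exp (- (l * t)))) (\<lambda>k. f (Suc k))"
  have G0: "0 \<le> G" unfolding G_def by (rule integral_nonneg_AE) (use f in auto)
  have "measure_pmf.expectation (X_pmf w l t) f = measure_pmf.expectation (bernoulli_pmf w) (\<lambda>b. if b then G else f 1)"
    unfolding X_pmf_def
  proof (rule expectation_bind_pmf_nonneg)
    fix b
    show "0 \<le> (if b then G else f 1)" using G0 f by auto
    show "integrable (measure_pmf (if b then map_pmf Suc (geometric_pmf (exp (- (l * t)))) else return_pmf 1)) f"
      by (rule integrable_bounded_pmf[where B=1]) (use f in \<open>auto simp: abs_le_iff\<close>)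
    show "measure_pmf.expectation (if b then map_pmf Suc (geometric_pmf (exp (- (l * t)))) else return_pmf 1) f = (if b then G else f 1)"
      by (simp add: G_def)
  qed (use f in auto)
  also have "\<dots> = w * G + (1 - w) * f 1"
    by (subst integral_measure_pmf[of UNIV]) (use w in \<open>auto simp: UNIV_bool\<close>)
  finally show ?thesis unfolding G_def .
qed



definition RR :: "nat \<Rightarrow> (nat \<Rightarrow> nat) \<Rightarrow> real" where
  "RR N X = ffact2 (X 0) / (real (\<Sum>i<N. X i) * (real (\<Sum>i<N. X i) - 1))"

lemma ffact2_nonneg: "0 \<le> ffact2 v" by (cases v) (auto simp: ffact2_def)

lemma RR_nonneg: "0 \<le> RR N X"
proof -
  have "0 \<le> real (\<Sum>i<N. X i) * (real (\<Sum>i<N. X i) - 1)"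
    by (cases "(\<Sum>i<N. X i)") auto
  then show ?thesis unfolding RR_def using ffact2_nonneg by simp
qed

lemma set_Xvec:
  assumes "X \<in> set_pmf (Xvec_pmf w l t N)"
  shows "\<And>i. i < N \<Longrightarrow> 1 \<le> X i" "\<And>i. N \<le> i \<Longrightarrow> X i = 0"
proof -
  have *: "\<forall>x. (x < N \<longrightarrow> X x \<in> set_pmf (X_pmf w l t)) \<and> (\<not> x < N \<longrightarrow> X x = 0)"
    using assms unfolding Xvec_pmf_def by (auto simp: set_Pi_pmf PiE_dflt_def)
  show "\<And>i. i < N \<Longrightarrow> 1 \<le> X i" using * set_X_pmf by blast
  show "\<And>i. N \<le> i \<Longrightarrow> X i = 0" using * by auto
qed

lemma nu1_expectation:
  assumes N: "2 \<le> N" and w: "0 \<le> w" "w \<le> 1"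
  shows "measure_pmf.expectation (nu1_pmf w l t N) ffact2 =
         measure_pmf.expectation (Xvec_pmf w l t N) (\<lambda>X. real N * (real N - 1) * RR N X)"
  unfolding nu1_pmf_def
proof (rule expectation_bind_pmf_nonneg)
  fix X
  show "0 \<le> ffact2 y" for y by (rule ffact2_nonneg)
  show "0 \<le> real N * (real N - 1) * RR N X" using N RR_nonneg by simp
  assume X: "X \<in> set_pmf (Xvec_pmf w l t N)"
  define U where "U = individuals X N"
  define B :: "(nat \<times> nat) set" where "B = {0} \<times> {..<X 0}"
  define F where "F = {A. A \<subseteq> U \<and> card A = N}"
  have Ueq: "U = Sigma {..<N} (\<lambda>i. {..<X i})" unfolding U_def individuals_def by auto
  have finU: "finite U" unfolding Ueq by auto
  have cardU: "card U = (\<Sum>i<N. X i)" unfolding Ueq by (subst card_SigmaI) auto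
  have NU: "N \<le> card U"
  proof -
    have "(\<Sum>i<N. (1::nat)) \<le> (\<Sum>i<N. X i)" by (rule sum_mono) (use set_Xvec(1)[OF X] in auto)
    then show ?thesis unfolding cardU by simp
  qed
  have BU: "B \<subseteq> U" unfolding B_def Ueq using N by auto
  have cardB: "card B = X 0" unfolding B_def by simp
  have finF: "finite F" unfolding F_def by (rule finite_subset[of _ "Pow U"]) (use finU in auto)
  obtain T where "T \<subseteq> U" "card T = N" using obtain_subset_with_card_n[OF NU] by blast
  then have neF: "F \<noteq> {}" unfolding F_def by auto
  have eqA: "card {p \<in> A. fst p = 0} = card (A \<inter> B)" if "A \<in> F" for A
  proof -
    have "{p \<in> A. fst p = 0} = A \<inter> B" using that unfolding F_def B_def Ueq by auto
    then show ?thesis by simp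
  qed
  have "measure_pmf.expectation (map_pmf (\<lambda>A. card {p \<in> A. fst p = 0}) (pmf_of_set F)) ffact2
      = measure_pmf.expectation (pmf_of_set F) (\<lambda>A. ffact2 (card {p \<in> A. fst p = 0}))" by simp
  also have "\<dots> = (\<Sum>A\<in>F. ffact2 (card {p \<in> A. fst p = 0})) / card F"
    by (rule integral_pmf_of_set[OF neF finF])
  also have "\<dots> = (\<Sum>A\<in>F. ffact2 (card (A \<inter> B))) / card F"
    using eqA by (simp cong: sum.cong)
  also have "\<dots> = measure_pmf.expectation (pmf_of_set F) (\<lambda>A. ffact2 (card (A \<inter> B)))"
    by (rule integral_pmf_of_set[OF neF finF, symmetric])
  also have "\<dots> = ffact2 (card B) * (real N * (real N - 1)) / (real (card U) * (real (card U) - 1))"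
    unfolding F_def by (rule hyper[OF finU BU N NU])
  also have "\<dots> = real N * (real N - 1) * RR N X"
    unfolding RR_def cardB cardU by simp
  finally show "measure_pmf.expectation (map_pmf (\<lambda>A. card {p \<in> A. fst p = 0})
      (pmf_of_set {A. A \<subseteq> individuals X N \<and> card A = N})) ffact2 = real N * (real N - 1) * RR N X"
    unfolding F_def U_def .
  show "integrable (measure_pmf (map_pmf (\<lambda>A. card {p \<in> A. fst p = 0})
      (pmf_of_set {A. A \<subseteq> individuals X N \<and> card A = N}))) ffact2"
    by (rule integrable_measure_pmf_finite) (use finF neF in \<open>simp add: F_def U_def\<close>)
qed



lemma RR_upper:
  assumes N: "N = Suc m" "1 \<le> m" and X: "\<And>i. i < N \<Longrightarrow> 1 \<le> X i"
  shows "RR N X \<le> hh N (X 0)"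
proof -
  define r where "r = (\<Sum>i<m. X (Suc i))"
  have S: "(\<Sum>i<N. X i) = X 0 + r" unfolding r_def N by (simp only: sum.lessThan_Suc_shift)
  have "(\<Sum>i<m. (1::nat)) \<le> r" unfolding r_def by (rule sum_mono) (use X N in auto)
  then have rm: "m \<le> r" by simp
  show ?thesis
  proof (cases "X 0 = 0")
    case True then show ?thesis by (simp add: RR_def hh_def ffact2_def)
  next
    case False
    have d1: "0 < (real (X 0) + real N - 1) * (real (X 0) + real N - 2)" using N False by auto
    have "(real (X 0) + real N - 1) * (real (X 0) + real N - 2) \<le> real (X 0 + r) * (real (X 0 + r) - 1)"
      using N rm by (intro mult_mono) auto
    then show ?thesis unfolding RR_def hh_def S
      by (intro divide_left_mono ffact2_nonneg d1 mult_pos_pos) (use d1 N rm False in auto)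
  qed
qed

lemma RR_lower:
  assumes N: "N = Suc m" "1 \<le> m" and X: "\<And>i. i < N \<Longrightarrow> 1 \<le> X i"
  shows "hh N (X 0) * (\<Prod>i<m. if X (Suc i) = 1 then 1 else 0) \<le> RR N X"
proof (cases "\<forall>i<m. X (Suc i) = 1")
  case True
  have "(\<Sum>i<m. X (Suc i)) = (\<Sum>i<m. 1)" using True by (intro sum.cong) auto
  then have S: "(\<Sum>i<N. X i) = X 0 + m" unfolding N by (simp only: sum.lessThan_Suc_shift) simp
  have "RR N X = hh N (X 0)" unfolding RR_def hh_def S using N by (simp add: algebra_simps)
  then show ?thesis using True by simp
next
  case False
  have "(\<Prod>i<m. if X (Suc i) = 1 then 1 else (0::real)) = 0" by (rule prod_zero) (use False in auto)
  then show ?thesis using RR_nonneg[of N X] by (simp only: mult_zero_right)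
qed

lemma cN_bounds:
  fixes l t :: real
  assumes N: "2 \<le> N" and w: "0 \<le> w" "w \<le> 1"
  defines "a \<equiv> measure_pmf.expectation (geometric_pmf (exp (- (l * t)))) (\<lambda>k. hh N (Suc k))"
  shows "\<exists>e. 1 - w \<le> e \<and> e \<le> 1 \<and>
     real N * w * a * e ^ (N - 1) \<le> measure_pmf.expectation (nu1_pmf w l t N) ffact2 / (real N - 1) \<and>
     measure_pmf.expectation (nu1_pmf w l t N) ffact2 / (real N - 1) \<le> real N * w * a"
proof -
  obtain m where Nm: "N = Suc m" "1 \<le> m" using N by (metis Suc_le_D Suc_le_mono one_add_one plus_1_eq_Suc)
  define XV where "XV = Xvec_pmf w l t N"
  define e where "e = measure_pmf.expectation (X_pmf w l t) (\<lambda>v. if v = 1 then 1 else (0::real))"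
  define f :: "nat \<Rightarrow> nat \<Rightarrow> real" where "f = (\<lambda>i v. if i = 0 then hh N v else if v = 1 then 1 else (0::real))"
  have hb: "0 \<le> hh N v" "hh N v \<le> 1" for v using hh_bounds[OF N] by auto
  have Eh: "measure_pmf.expectation (X_pmf w l t) (hh N) = w * a"
    using expectation_X_pmf[OF w, of "hh N" l t] hb unfolding a_def by simp
  have e_eq: "e = w * measure_pmf.expectation (geometric_pmf (exp (- (l * t)))) (\<lambda>k. if Suc k = 1 then 1 else (0::real)) + (1 - w)"
    unfolding e_def by (subst expectation_X_pmf[OF w]) auto
  have g01: "0 \<le> measure_pmf.expectation (geometric_pmf (exp (- (l * t)))) (\<lambda>k. if Suc k = 1 then 1 else (0::real))"
    "measure_pmf.expectation (geometric_pmf (exp (- (l * t)))) (\<lambda>k. if Suc k = 1 then 1 else (0::real)) \<le> 1"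
    by (auto intro!: integral_nonneg_AE measure_pmf.prob_space_axioms simp: )
       (rule order.trans[OF integral_mono[where g="\<lambda>_. 1"]], auto intro!: integrable_bounded_pmf[where B=1])
  have e1: "1 - w \<le> e" "e \<le> 1" unfolding e_eq using g01 w
    by (auto intro: mult_left_le order.trans[OF mult_left_mono])
  have RRs: "0 \<le> RR N X \<and> RR N X \<le> hh N (X 0) \<and>
             (\<Prod>i<N. f i (X i)) \<le> RR N X" if "X \<in> set_pmf XV" for X
  proof -
    have X1: "\<And>i. i < N \<Longrightarrow> 1 \<le> X i" using set_Xvec(1) that unfolding XV_def by blast
    have "(\<Prod>i<N. f i (X i)) = hh N (X 0) * (\<Prod>i<m. if X (Suc i) = 1 then 1 else 0)"
      unfolding Nm f_def by (simp only: prod.lessThan_Suc_shift) simp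
    moreover have "RR N X \<le> hh N (X 0)" by (rule RR_upper[OF Nm]) (rule X1)
    moreover have "hh N (X 0) * (\<Prod>i<m. if X (Suc i) = 1 then 1 else 0) \<le> RR N X"
      by (rule RR_lower[OF Nm]) (rule X1)
    ultimately show ?thesis using RR_nonneg by simp
  qed
  have intRR: "integrable (measure_pmf XV) (RR N)"
    by (rule integrable_bounded_pmf[where B=1]) (use RRs hb in \<open>fastforce intro: order.trans simp: abs_le_iff\<close>)
  have eq1: "measure_pmf.expectation (nu1_pmf w l t N) ffact2 / (real N - 1) = real N * measure_pmf.expectation XV (RR N)"
    unfolding nu1_expectation[OF N w] XV_def using N by simp
  have up: "measure_pmf.expectation XV (RR N) \<le> measure_pmf.expectation XV (\<lambda>X. hh N (X 0))"
    by (rule integral_mono_AE[OF intRR]) (auto intro!: integrable_bounded_pmf[where B=1] AE_pmfI simp: RRs hb)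
  have "measure_pmf.expectation XV (\<lambda>X. hh N (X 0)) = measure_pmf.expectation (map_pmf (\<lambda>X. X 0) XV) (hh N)"
    by simp
  also have "map_pmf (\<lambda>X. X 0) XV = X_pmf w l t" unfolding XV_def Xvec_pmf_def
    by (subst Pi_pmf_component) (use N in auto)
  finally have up2: "measure_pmf.expectation XV (\<lambda>X. hh N (X 0)) = w * a" using Eh by simp
  have fb: "0 \<le> f i v" "f i v \<le> 1" for i v unfolding f_def using hb by auto
  have "measure_pmf.expectation XV (\<lambda>X. \<Prod>i<N. f i (X i)) = (\<Prod>i<N. measure_pmf.expectation (X_pmf w l t) (f i))"
    unfolding XV_def Xvec_pmf_def
    by (rule expectation_prod_Pi_pmf) (auto intro!: integrable_bounded_pmf[where B=1] simp: fb abs_le_iff)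
  also have "\<dots> = w * a * e ^ m"
    unfolding Nm by (simp only: prod.lessThan_Suc_shift) (simp add: f_def Eh e_def)
  finally have low2: "measure_pmf.expectation XV (\<lambda>X. \<Prod>i<N. f i (X i)) = w * a * e ^ m" .
  have pn: "0 \<le> (\<Prod>i<N. f i (x i))" for x by (intro prod_nonneg) (simp add: fb)
  have low: "measure_pmf.expectation XV (\<lambda>X. \<Prod>i<N. f i (X i)) \<le> measure_pmf.expectation XV (RR N)"
    by (rule integral_mono_AE[OF _ intRR])
       (auto intro!: integrable_bounded_pmf[where B=1] AE_pmfI prod_nonneg prod_le_1 simp: RRs fb abs_le_iff order.trans[OF _ pn])
  show ?thesis
  proof (intro exI conjI)
    show "1 - w \<le> e" "e \<le> 1" by (fact e1)+
    show "real N * w * a * e ^ (N - 1) \<le> measure_pmf.expectation (nu1_pmf w l t N) ffact2 / (real N - 1)"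
      unfolding eq1 using low low2 Nm by (simp add: mult.assoc)
    show "measure_pmf.expectation (nu1_pmf w l t N) ffact2 / (real N - 1) \<le> real N * w * a"
      unfolding eq1 using up up2 by (simp add: mult.assoc mult_left_mono)
  qed
qed



lemma asymp_squeeze:
  fixes a b l u :: "nat \<Rightarrow> real"
  assumes ev: "eventually (\<lambda>x. 0 \<le> b x \<and> b x * l x \<le> a x \<and> a x \<le> b x * u x) sequentially"
    and l: "l \<longlonglongrightarrow> 1" and u: "u \<longlonglongrightarrow> 1"
  shows "a \<sim>[sequentially] b"
proof (rule asymp_equivI)
  let ?r = "\<lambda>x. if a x = 0 \<and> b x = 0 then 1 else a x / b x"
  show "?r \<longlonglongrightarrow> 1"
  proof (rule tendsto_sandwich)
    show "eventually (\<lambda>x. min (l x) 1 \<le> ?r x) sequentially"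
      using ev
    proof eventually_elim
      case (elim x)
      show ?case
      proof (cases "b x = 0")
        case True then show ?thesis using elim by auto
      next
        case False
        then have "b x > 0" using elim by auto
        then have "l x \<le> a x / b x" using elim by (simp add: pos_le_divide_eq mult.commute)
        then show ?thesis using False by auto
      qed
    qed
    show "eventually (\<lambda>x. ?r x \<le> max (u x) 1) sequentially"
      using ev
    proof eventually_elim
      case (elim x)
      show ?case
      proof (cases "b x = 0")
        case True then show ?thesis using elim by auto
      next
        case False
        then have "b x > 0" using elim by auto
        then have "a x / b x \<le> u x" using elim by (simp add: pos_divide_le_eq mult.commute)
        then show ?thesis using False by auto
      qed
    qed
    show "(\<lambda>x. min (l x) 1) \<longlonglongrightarrow> 1" using tendsto_min[OF l tendsto_const[of 1]] by simp
    show "(\<lambda>x. max (u x) 1) \<longlonglongrightarrow> 1" using tendsto_max[OF u tendsto_const[of 1]] by simp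
  qed
qed

definition aN :: "(nat \<Rightarrow> real) \<Rightarrow> (nat \<Rightarrow> real) \<Rightarrow> nat \<Rightarrow> real" where
  "aN lam T N = measure_pmf.expectation (geometric_pmf (exp (- (lam N * T N)))) (\<lambda>k. hh N (Suc k))"

lemma aN_bounds: "2 \<le> N \<Longrightarrow> 0 \<le> aN lam T N \<and> aN lam T N \<le> 1"
proof -
  assume N: "2 \<le> N"
  have hb: "0 \<le> hh N v" "hh N v \<le> 1" for v using hh_bounds[OF N] by auto
  have "aN lam T N \<le> measure_pmf.expectation (geometric_pmf (exp (- (lam N * T N)))) (\<lambda>k. 1)"
    unfolding aN_def
    by (rule integral_mono) (auto intro!: integrable_bounded_pmf[where B=1] simp: hb abs_le_iff order.trans[OF _ hb(1)])
  moreover have "0 \<le> aN lam T N" unfolding aN_def by (rule integral_nonneg_AE) (simp add: hb)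
  ultimately show ?thesis by simp
qed

lemma cN_main:
  fixes omega lam T :: "nat \<Rightarrow> real"
  assumes omega_range: "\<forall>N. 0 \<le> omega N \<and> omega N \<le> 1"
    and lim: "(\<lambda>N. real N * omega N) \<longlonglongrightarrow> 0"
  shows "(\<lambda>N. cN omega lam T N) \<longlonglongrightarrow> 0"
    and "(\<lambda>N. cN omega lam T N) \<sim>[sequentially] (\<lambda>N. real N * omega N * aN lam T N)"
proof -
  have B: "0 \<le> real N * omega N * aN lam T N \<and>
      real N * omega N * aN lam T N * (1 - real N * omega N) \<le> cN omega lam T N \<and>
      cN omega lam T N \<le> real N * omega N * aN lam T N * 1" if N: "2 \<le> N" for N
  proof -
    have w: "0 \<le> omega N" "omega N \<le> 1" using omega_range by auto
    obtain e where e: "1 - omega N \<le> e" "e \<le> 1"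
      "real N * omega N * aN lam T N * e ^ (N - 1) \<le> cN omega lam T N"
      "cN omega lam T N \<le> real N * omega N * aN lam T N"
      using cN_bounds[OF N w, of "lam N" "T N"] unfolding cN_def aN_def by blast
    have a: "0 \<le> aN lam T N" using aN_bounds[OF N] by simp
    have L0: "0 \<le> real N * omega N * aN lam T N" using a w by simp
    have "1 - real (N - 1) * omega N \<le> (1 - omega N) ^ (N - 1)"
      using Bernoulli_inequality[of "- omega N" "N - 1"] w by simp
    also have "\<dots> \<le> e ^ (N - 1)" using e w by (intro power_mono) auto
    finally have "1 - real N * omega N \<le> e ^ (N - 1)"
      using w N by (smt (verit) mult_right_mono of_nat_diff of_nat_le_iff diff_le_self)
    then have "real N * omega N * aN lam T N * (1 - real N * omega N) \<le> real N * omega N * aN lam T N * e ^ (N - 1)"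
      using L0 by (intro mult_left_mono) auto
    then show ?thesis using e L0 by simp
  qed
  have ev: "eventually (\<lambda>N. 0 \<le> real N * omega N * aN lam T N \<and>
      real N * omega N * aN lam T N * (1 - real N * omega N) \<le> cN omega lam T N \<and>
      cN omega lam T N \<le> real N * omega N * aN lam T N * 1) sequentially"
    using eventually_ge_at_top[of 2] by eventually_elim (rule B)
  show "(\<lambda>N. cN omega lam T N) \<sim>[sequentially] (\<lambda>N. real N * omega N * aN lam T N)"
    by (rule asymp_squeeze[OF ev]) (use tendsto_diff[OF tendsto_const[of 1] lim] in simp_all)
  show "(\<lambda>N. cN omega lam T N) \<longlonglongrightarrow> 0"
  proof (rule tendsto_sandwich)
    show "eventually (\<lambda>N. 0 \<le> cN omega lam T N) sequentially"
      using eventually_ge_at_top[of 2]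
    proof eventually_elim
      case (elim N)
      have "0 \<le> measure_pmf.expectation (nu1_pmf (omega N) (lam N) (T N) N) ffact2"
        by (rule integral_nonneg_AE) (simp add: ffact2_nonneg)
      then show ?case unfolding cN_def using elim by simp
    qed
    show "eventually (\<lambda>N. cN omega lam T N \<le> real N * omega N) sequentially"
      using eventually_ge_at_top[of 2]
    proof eventually_elim
      case (elim N)
      have "real N * omega N * aN lam T N \<le> real N * omega N * 1"
        using aN_bounds[OF elim] omega_range by (intro mult_left_mono) auto
      then show ?case using B[OF elim] by simp
    qed
  qed (simp_all add: lim)
qed



lemma geom_expectation:
  fixes f :: "nat \<Rightarrow> real"
  assumes p: "0 < p" "p \<le> 1" and f: "\<And>n. 0 \<le> f n" and s: "(\<lambda>n. (1-p)^n * f n) sums s"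
  shows "integrable (measure_pmf (geometric_pmf p)) f"
    and "measure_pmf.expectation (geometric_pmf p) f = p * s"
proof -
  have *: "(\<lambda>n. pmf (geometric_pmf p) n * f n) sums (p * s)"
    using sums_mult[OF s, of p] p by (simp add: mult_ac)
  have int: "integrable (count_space UNIV) (\<lambda>n. pmf (geometric_pmf p) n * f n)"
    using * p f unfolding integrable_count_space_nat_iff by (simp add: sums_iff)
  show "integrable (measure_pmf (geometric_pmf p)) f"
    unfolding measure_pmf_eq_density using int
    by (subst integrable_density) auto
  have "measure_pmf.expectation (geometric_pmf p) f =
        (\<integral>n. pmf (geometric_pmf p) n * f n \<partial>count_space UNIV)"
    unfolding measure_pmf_eq_density by (subst integral_density) auto
  also have "\<dots> = p * s"
    using * int by (subst integral_count_space_nat) (simp_all add: sums_iff)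
  finally show "measure_pmf.expectation (geometric_pmf p) f = p * s" .
qed

lemma geom_sums:
  fixes z :: real assumes z: "norm z < 1"
  shows "(\<lambda>n. z^n * (real n + 1)) sums (1/(1-z)^2)"
    and "(\<lambda>n. z^n * ((real n + 1) * (real n + 2))) sums (2/(1-z)^3)"
    and "(\<lambda>n. z^n * ((real n + 1) * (real n + 2) * (real n + 3))) sums (6/(1-z)^4)"
proof -
  define c0 :: "nat \<Rightarrow> real" where "c0 = (\<lambda>_. 1)"
  have s0: "(\<lambda>n. c0 n * z ^ n) sums (1/(1-z))" if "norm z < 1" for z :: real
    using geometric_sums[OF that] by (simp add: c0_def)
  have dw: "((\<lambda>w. 1 / w ^ Suc k) has_field_derivative (- real (Suc k) / w ^ Suc (Suc k))) (at w)"
    if "w \<noteq> 0" for w :: real and k :: nat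
    using that apply (auto intro!: derivative_eq_intros simp: field_simps)
    by (cases k) auto
  have dz: "((\<lambda>z. 1 / (1 - z) ^ Suc k) has_field_derivative (real (Suc k) / (1 - z) ^ Suc (Suc k))) (at z)"
    if "norm z < 1" for z :: real and k :: nat
  proof -
    have "1 - z \<noteq> 0" using that by auto
    note nz = this
    have Db: "((\<lambda>z. 1 - z) has_field_derivative -1) (at z)" by (auto intro!: derivative_eq_intros)
    have "((\<lambda>z. 1 / (1 - z) ^ Suc k) has_field_derivative (- real (Suc k) / (1 - z) ^ Suc (Suc k)) * (-1)) (at z)"
      using DERIV_chain2[OF dw[OF nz, of k] Db] by simp
    moreover have eq: "(- real (Suc k) / (1 - z) ^ Suc (Suc k)) * (-1) = real (Suc k) / (1 - z) ^ Suc (Suc k)"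
      by (simp only: mult_minus1_right minus_divide_left[symmetric] minus_minus)
    ultimately show ?thesis by (simp only: eq)
  qed
  have d1: "((\<lambda>z. 1/(1-z)) has_field_derivative (1/(1-z)^2)) (at z)" if "norm z < 1" for z :: real
    using dz[OF that, of 0] by (simp add: numeral_2_eq_2)
  have s1: "(\<lambda>n. diffs c0 n * z ^ n) sums (1/(1-z)^2)" if "norm z < 1" for z :: real
    by (rule termdiffs_sums_strong[OF s0 d1[OF that] that])
  have d2: "((\<lambda>z. 1/(1-z)^2) has_field_derivative (2/(1-z)^3)) (at z)" if "norm z < 1" for z :: real
    using dz[OF that, of 1] by (simp add: numeral_2_eq_2 numeral_3_eq_3)
  have s2: "(\<lambda>n. diffs (diffs c0) n * z ^ n) sums (2/(1-z)^3)" if "norm z < 1" for z :: real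
    by (rule termdiffs_sums_strong[OF s1 d2[OF that] that])
  have d3: "((\<lambda>z. 2/(1-z)^3) has_field_derivative (6/(1-z)^4)) (at z)" if "norm z < 1" for z :: real
    using DERIV_cmult[OF dz[OF that, of 2], of 2] by (simp add: numeral_3_eq_3 eval_nat_numeral)
  have s3: "(\<lambda>n. diffs (diffs (diffs c0)) n * z ^ n) sums (6/(1-z)^4)"
    by (rule termdiffs_sums_strong[OF s2 d3[OF z] z])
  show "(\<lambda>n. z^n * (real n + 1)) sums (1/(1-z)^2)"
    using s1[OF z] by (simp add: diffs_def c0_def mult.commute add.commute)
  show "(\<lambda>n. z^n * ((real n + 1) * (real n + 2))) sums (2/(1-z)^3)"
    using s2[OF z] by (simp add: diffs_def c0_def algebra_simps)
  show "(\<lambda>n. z^n * ((real n + 1) * (real n + 2) * (real n + 3))) sums (6/(1-z)^4)"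
    using s3 by (simp add: diffs_def c0_def algebra_simps)
qed



lemma hh_Suc: "hh N (Suc k) = real k * (real k + 1) / ((real k + real N) * (real k + real N - 1))"
  by (simp add: hh_def ffact2_def algebra_simps)

lemma pw_big:
  fixes x n L :: real
  assumes x: "L \<le> x" and n: "2 \<le> n" and L: "1 \<le> L"
  shows "1 - 2 * n / L \<le> x * (x + 1) / ((x + n) * (x + n - 1))"
proof -
  define D where "D = (x + n) * (x + n - 1)"
  have Dpos: "0 < D" unfolding D_def using x n L by auto
  have nn: "1 * n \<le> n * n" by (rule mult_right_mono) (use n in auto)
  have e: "D - x * (x + 1) = 2 * n * x - 2 * x + n * n - n" by (simp add: D_def algebra_simps)
  have e2: "2 * n * (x + n - 1) = 2 * n * x + 2 * (n * n) - 2 * n" by (simp add: algebra_simps)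
  have 1: "D - x * (x + 1) \<le> 2 * n * (x + n - 1)" unfolding e e2 using x n L nn by linarith
  have 2: "L * (x + n - 1) \<le> D" unfolding D_def using x n L by (intro mult_right_mono) auto
  have 3: "2 * n * (x + n - 1) \<le> 2 * n * D / L"
  proof -
    have "2 * n * (L * (x + n - 1)) \<le> 2 * n * D" by (rule mult_left_mono[OF 2]) (use n in auto)
    then have "(2 * n * (L * (x + n - 1))) / L \<le> 2 * n * D / L" using L by (intro divide_right_mono) auto
    moreover have "(2 * n * (L * (x + n - 1))) / L = 2 * n * (x + n - 1)" using L by simp
    ultimately show ?thesis by simp
  qed
  have "D * (1 - 2 * n / L) = D - 2 * n * D / L" by (simp add: algebra_simps)
  also have "\<dots> \<le> x * (x + 1)" using 1 3 by linarith
  finally show ?thesis unfolding D_def[symmetric] using Dpos by (simp add: pos_le_divide_eq mult.commute)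
qed

lemma pw_upper:
  fixes x n :: real
  assumes x: "0 \<le> x" and n: "2 \<le> n"
  shows "x * (x + 1) / ((x + n) * (x + n - 1)) \<le> x * (x + 1) / (n * (n - 1))"
proof -
  have "n * (n - 1) \<le> (x + n) * (x + n - 1)" using x n by (intro mult_mono) auto
  moreover have "0 < n * (n - 1)" using n by auto
  ultimately show ?thesis using x by (intro divide_left_mono) auto
qed

lemma pw_lower:
  fixes x n :: real
  assumes x: "0 \<le> x" and n: "2 \<le> n"
  shows "x * (x + 1) / n^2 - 2 * ((x + 1) * (x + 2) * (x + 3)) / n^3 \<le> x * (x + 1) / ((x + n) * (x + n - 1))"
proof -
  have np: "0 < n" using n by auto
  have a: "x * (x + 1) / (x + n)^2 \<le> x * (x + 1) / ((x + n) * (x + n - 1))"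
  proof -
    have "(x + n) * (x + n - 1) \<le> (x + n)^2" using x n by (simp add: power2_eq_square)
    moreover have "0 < (x + n) * (x + n - 1)" using x n by auto
    moreover have "0 < (x + n)^2" using x n by auto
    ultimately show ?thesis using x n by (intro divide_left_mono mult_pos_pos) auto
  qed
  have b: "(n - 2 * x) / n^3 \<le> 1 / (x + n)^2"
  proof -
    have "(n - 2 * x) * (x + n)^2 \<le> n^3"
    proof -
      have "(n - 2 * x) * (x + n)^2 = n^3 - 3 * x^2 * n - 2 * x^3"
        by (simp add: algebra_simps power2_eq_square power3_eq_cube)
      also have "\<dots> \<le> n^3"
      proof -
        have "0 \<le> 3 * x^2 * n" "0 \<le> 2 * x^3" using x np by auto
        then show ?thesis by linarith
      qed
      finally show ?thesis .
    qed
    then show ?thesis using np x by (simp add: field_simps)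
  qed
  have "x * (x + 1) / n^2 - 2 * ((x + 1) * (x + 2) * (x + 3)) / n^3 \<le> x * (x + 1) * ((n - 2 * x) / n^3)"
  proof -
    have "x * (x + 1) * ((n - 2 * x) / n^3) = x * (x + 1) / n^2 - 2 * (x * x * (x + 1)) / n^3"
      using np by (simp add: field_simps power2_eq_square power3_eq_cube)
    moreover have "x * x * (x + 1) \<le> (x + 1) * (x + 2) * (x + 3)"
      using x by (intro mult_mono) auto
    ultimately show ?thesis using np by (simp add: divide_right_mono)
  qed
  also have "\<dots> \<le> x * (x + 1) * (1 / (x + n)^2)" using b x by (intro mult_left_mono) auto
  also have "\<dots> = x * (x + 1) / (x + n)^2" by simp
  finally show ?thesis using a by linarith
qed



lemma aN_big_lower:
  assumes N: "2 \<le> N" and L: "1 \<le> L" and p: "0 < p" "p \<le> 1"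
  shows "1 - real L * p - 2 * real N / real L \<le> measure_pmf.expectation (geometric_pmf p) (\<lambda>k. hh N (Suc k))"
proof -
  define ind :: "nat \<Rightarrow> real" where "ind = (\<lambda>k. if k < L then 1 else 0)"
  define c where "c = 2 * real N / real L"
  have hb: "0 \<le> hh N v" "hh N v \<le> 1" for v using hh_bounds[OF N] by auto
  have c0: "0 \<le> c" unfolding c_def by simp
  have pw: "1 - ind k - c \<le> hh N (Suc k)" for k
  proof (cases "k < L")
    case True then show ?thesis using hb[of "Suc k"] c0 by (simp add: ind_def)
  next
    case False
    then have "real L \<le> real k" by simp
    from pw_big[OF this _ _, of "real N"] N L
    show ?thesis using False unfolding hh_Suc ind_def c_def by simp
  qed
  have int_ind: "integrable (measure_pmf (geometric_pmf p)) ind"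
    by (rule integrable_bounded_pmf[where B=1]) (simp add: ind_def)
  have Eind: "measure_pmf.expectation (geometric_pmf p) ind \<le> real L * p"
  proof -
    have "measure_pmf.expectation (geometric_pmf p) ind = (\<Sum>a\<in>{..<L}. pmf (geometric_pmf p) a *\<^sub>R ind a)"
      by (rule integral_measure_pmf) (auto simp: ind_def split: if_splits)
    also have "\<dots> = (\<Sum>a<L. (1 - p) ^ a * p)" using p by (simp add: ind_def)
    also have "\<dots> \<le> (\<Sum>a<L. p)" using p by (intro sum_mono) (simp add: power_le_one)
    finally show ?thesis by simp
  qed
  have "measure_pmf.expectation (geometric_pmf p) (\<lambda>k. 1 - ind k - c) \<le> measure_pmf.expectation (geometric_pmf p) (\<lambda>k. hh N (Suc k))"
  proof (rule integral_mono[OF _ _ pw])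
    show "integrable (measure_pmf (geometric_pmf p)) (\<lambda>k. 1 - ind k - c)"
      by (rule integrable_bounded_pmf[where B="1 + c"]) (use c0 in \<open>auto simp: ind_def abs_le_iff\<close>)
    show "integrable (measure_pmf (geometric_pmf p)) (\<lambda>k. hh N (Suc k))"
      by (rule integrable_bounded_pmf[where B=1]) (simp add: hb abs_le_iff order.trans[OF _ hb(1)])
  qed
  moreover have "measure_pmf.expectation (geometric_pmf p) (\<lambda>k. 1 - ind k - c) = 1 - measure_pmf.expectation (geometric_pmf p) ind - c"
    using int_ind by (simp add: Bochner_Integration.integral_diff)
  ultimately show ?thesis using Eind unfolding c_def by linarith
qed

lemma geom_moments:
  assumes p: "0 < p" "p \<le> 1"
  shows "integrable (measure_pmf (geometric_pmf p)) (\<lambda>k. real k * (real k + 1))"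
    and "measure_pmf.expectation (geometric_pmf p) (\<lambda>k. real k * (real k + 1)) = 2 / p^2 - 2 / p"
    and "integrable (measure_pmf (geometric_pmf p)) (\<lambda>k. (real k + 1) * (real k + 2) * (real k + 3))"
    and "measure_pmf.expectation (geometric_pmf p) (\<lambda>k. (real k + 1) * (real k + 2) * (real k + 3)) = 6 / p^3"
proof -
  have z: "norm (1 - p) < 1" using p by auto
  have s2: "(\<lambda>n. (1-p)^n * ((real n + 1) * (real n + 2))) sums (2/p^3)" using geom_sums(2)[OF z] by simp
  have s1: "(\<lambda>n. (1-p)^n * (real n + 1)) sums (1/p^2)" using geom_sums(1)[OF z] by simp
  have s3: "(\<lambda>n. (1-p)^n * ((real n + 1) * (real n + 2) * (real n + 3))) sums (6/p^3/p)" using geom_sums(3)[OF z] by (simp add: power_Suc2 eval_nat_numeral mult.assoc)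
  have "(\<lambda>n. (1-p)^n * ((real n + 1) * (real n + 2)) - 2 * ((1-p)^n * (real n + 1))) sums (2/p^3 - 2 * (1/p^2))"
    by (intro sums_diff sums_mult s1 s2)
  then have s: "(\<lambda>n. (1-p)^n * (real n * (real n + 1))) sums (2/p^3 - 2/p^2)"
    by (simp add: algebra_simps)
  show "integrable (measure_pmf (geometric_pmf p)) (\<lambda>k. real k * (real k + 1))"
    by (rule geom_expectation(1)[OF p _ s]) simp
  show "measure_pmf.expectation (geometric_pmf p) (\<lambda>k. real k * (real k + 1)) = 2 / p^2 - 2 / p"
  proof -
    have "measure_pmf.expectation (geometric_pmf p) (\<lambda>k. real k * (real k + 1)) = p * (2/p^3 - 2/p^2)"
      by (rule geom_expectation(2)[OF p _ s]) simp
    also have "\<dots> = 2 / p^2 - 2 / p" using p by (simp add: field_simps eval_nat_numeral)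
    finally show ?thesis .
  qed
  show "integrable (measure_pmf (geometric_pmf p)) (\<lambda>k. (real k + 1) * (real k + 2) * (real k + 3))"
    by (rule geom_expectation(1)[OF p _ s3]) simp
  show "measure_pmf.expectation (geometric_pmf p) (\<lambda>k. (real k + 1) * (real k + 2) * (real k + 3)) = 6 / p^3"
  proof -
    have "measure_pmf.expectation (geometric_pmf p) (\<lambda>k. (real k + 1) * (real k + 2) * (real k + 3)) = p * (6/p^3/p)"
      by (rule geom_expectation(2)[OF p _ s3]) simp
    also have "\<dots> = 6 / p^3" using p by (simp add: field_simps eval_nat_numeral)
    finally show ?thesis .
  qed
qed

lemma aN_small_bounds:
  assumes N: "2 \<le> N" and p: "0 < p" "p \<le> 1"
  shows "measure_pmf.expectation (geometric_pmf p) (\<lambda>k. hh N (Suc k)) \<le> (2 / p^2 - 2 / p) / (real N * (real N - 1))"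
    and "(2 / p^2 - 2 / p) / (real N)^2 - 12 / (p^3 * (real N)^3) \<le> measure_pmf.expectation (geometric_pmf p) (\<lambda>k. hh N (Suc k))"
proof -
  have hb: "0 \<le> hh N v" "hh N v \<le> 1" for v using hh_bounds[OF N] by auto
  have inth: "integrable (measure_pmf (geometric_pmf p)) (\<lambda>k. hh N (Suc k))"
    by (rule integrable_bounded_pmf[where B=1]) (simp add: hb abs_le_iff order.trans[OF _ hb(1)])
  note m = geom_moments[OF p]
  have nN: "2 \<le> real N" using N by simp
  have "measure_pmf.expectation (geometric_pmf p) (\<lambda>k. hh N (Suc k)) \<le>
        measure_pmf.expectation (geometric_pmf p) (\<lambda>k. real k * (real k + 1) / (real N * (real N - 1)))"
    by (rule integral_mono[OF inth]) (auto intro!: m(1) simp: hh_Suc pw_upper[OF _ nN])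
  also have "\<dots> = (2 / p^2 - 2 / p) / (real N * (real N - 1))"
    using m(2) by simp
  finally show "measure_pmf.expectation (geometric_pmf p) (\<lambda>k. hh N (Suc k)) \<le> (2 / p^2 - 2 / p) / (real N * (real N - 1))" .
  have "(2 / p^2 - 2 / p) / (real N)^2 - 12 / (p^3 * (real N)^3) =
      measure_pmf.expectation (geometric_pmf p) (\<lambda>k. real k * (real k + 1) / (real N)^2 - 2 * ((real k + 1) * (real k + 2) * (real k + 3)) / (real N)^3)"
    using m by (simp add: Bochner_Integration.integral_diff)
  also have "\<dots> \<le> measure_pmf.expectation (geometric_pmf p) (\<lambda>k. hh N (Suc k))"
    by (rule integral_mono[OF _ inth]) (auto intro!: m(1) m(3) Bochner_Integration.integrable_diff simp: hh_Suc pw_lower[OF _ nN])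
  finally show "(2 / p^2 - 2 / p) / (real N)^2 - 12 / (p^3 * (real N)^3) \<le> measure_pmf.expectation (geometric_pmf p) (\<lambda>k. hh N (Suc k))" .
qed



lemma p_eq:
  assumes "0 < \<kappa>" "lam * t = \<beta> * ln (\<kappa> * real N)" "1 \<le> N"
  shows "exp (- (lam * t)) = (\<kappa> * real N) powr (-\<beta>)"
  using assms by (simp add: powr_def)

lemma p_range: "0 < (lam::real) \<Longrightarrow> 0 < t \<Longrightarrow> 0 < exp (- (lam * t)) \<and> exp (- (lam * t)) \<le> 1"
  using mult_pos_pos[of lam t] by simp

lemma aN_big:
  fixes lam T :: "nat \<Rightarrow> real"
  assumes lam_pos: "\<forall>N. 0 < lam N" and T_pos: "\<forall>N. 0 < T N"
    and k: "0 < \<kappa>" and b: "1 < \<beta>"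
    and ev: "\<forall>\<^sub>F N in sequentially. lam N * T N = \<beta> * ln (\<kappa> * real N)"
  shows "aN lam T \<longlonglongrightarrow> 1"
proof (rule tendsto_sandwich)
  define g where "g = (1 + \<beta>) / 2"
  have g: "0 < g" using b by (simp add: g_def)
  show "eventually (\<lambda>N. 1 - (real N powr g + 1) * (\<kappa> * real N) powr (-\<beta>) - 2 * real N / real N powr g \<le> aN lam T N) sequentially"
    using ev eventually_ge_at_top[of 2]
  proof eventually_elim
    case (elim N)
    define p where "p = (\<kappa> * real N) powr (-\<beta>)"
    have pe: "exp (- (lam N * T N)) = p" unfolding p_def by (rule p_eq) (use k elim in auto)
    have pr: "0 < p" "p \<le> 1" using p_range[of "lam N" "T N"] lam_pos T_pos pe by auto
    define L where "L = nat \<lceil>real N powr g\<rceil>"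
    have Ng: "1 \<le> real N powr g" using elim g by (intro ge_one_powr_ge_zero) auto
    have L1: "real N powr g \<le> real L" unfolding L_def by linarith
    have L2: "real L \<le> real N powr g + 1" unfolding L_def using Ng by linarith
    have L0: "1 \<le> L" using L1 Ng by linarith
    have "1 - real L * p - 2 * real N / real L \<le> aN lam T N"
      unfolding aN_def pe by (rule aN_big_lower[OF elim(2) L0 pr])
    moreover have "real L * p \<le> (real N powr g + 1) * p" using L2 pr by (intro mult_right_mono) auto
    moreover have "2 * real N / real L \<le> 2 * real N / real N powr g"
      using L1 Ng elim by (intro divide_left_mono mult_pos_pos) auto
    ultimately show ?case unfolding p_def by linarith
  qed
  show "eventually (\<lambda>N. aN lam T N \<le> 1) sequentially"
    using eventually_ge_at_top[of 2] by eventually_elim (use aN_bounds in blast)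
  show "(\<lambda>N. 1 - (real N powr g + 1) * (\<kappa> * real N) powr (-\<beta>) - 2 * real N / real N powr g) \<longlonglongrightarrow> 1"
    unfolding g_def using k b by real_asymp
qed simp

lemma aN_small:
  fixes lam T :: "nat \<Rightarrow> real"
  assumes lam_pos: "\<forall>N. 0 < lam N" and T_pos: "\<forall>N. 0 < T N"
    and k: "0 < \<kappa>" and b: "0 < \<beta>" "\<beta> < 1"
    and ev: "\<forall>\<^sub>F N in sequentially. lam N * T N = \<beta> * ln (\<kappa> * real N)"
  shows "aN lam T \<sim>[sequentially] (\<lambda>N. 2 * \<kappa> powr (2*\<beta>) * real N powr (2*\<beta> - 2))"
proof -
  define bb where "bb = (\<lambda>N::nat. 2 * \<kappa> powr (2*\<beta>) * real N powr (2*\<beta> - 2))"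
  define P where "P = (\<lambda>N::nat. (\<kappa> * real N) powr (-\<beta>))"
  define lo where "lo = (\<lambda>N. ((2 / (P N)^2 - 2 / P N) / (real N)^2 - 12 / ((P N)^3 * (real N)^3)) / bb N)"
  define up where "up = (\<lambda>N. ((2 / (P N)^2 - 2 / P N) / (real N * (real N - 1))) / bb N)"
  have "aN lam T \<sim>[sequentially] bb"
  proof (rule asymp_squeeze[where l=lo and u=up])
    show "eventually (\<lambda>N. 0 \<le> bb N \<and> bb N * lo N \<le> aN lam T N \<and> aN lam T N \<le> bb N * up N) sequentially"
      using ev eventually_ge_at_top[of 2]
    proof eventually_elim
      case (elim N)
      have pe: "exp (- (lam N * T N)) = P N" unfolding P_def by (rule p_eq) (use k elim in auto)
      have pr: "0 < P N" "P N \<le> 1" using p_range[of "lam N" "T N"] lam_pos T_pos pe by auto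
      have bpos: "0 < bb N" unfolding bb_def using k elim by simp
      note B = aN_small_bounds[OF elim(2) pr]
      show ?case using B bpos unfolding aN_def pe lo_def up_def by simp
    qed
    show "lo \<longlonglongrightarrow> 1" unfolding lo_def bb_def P_def using k b
      by (real_asymp simp: powr_minus power2_eq_square powr_add[symmetric])
    show "up \<longlonglongrightarrow> 1" unfolding up_def bb_def P_def using k b
      by (real_asymp simp: powr_minus power2_eq_square powr_add[symmetric])
  qed
  then show ?thesis unfolding bb_def .
qed



locale Ycpl =
  fixes M :: "real measure" and Y :: "real \<Rightarrow> real" and \<kappa> :: real
  assumes PM: "prob_space M" and Ym[measurable]: "Y \<in> borel_measurable M"
    and Yr: "\<forall>x\<in>space M. 0 \<le> Y x \<and> Y x \<le> 1"
    and tail: "\<forall>x. 0 \<le> x \<and> x < 1 \<longrightarrow> measure M {w \<in> space M. Y w > x} = exp (- x / (\<kappa> * (1 - x)))"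
    and kpos: "0 < \<kappa>"

context Ycpl
begin

interpretation prob_space M by (rule PM)

definition psi :: "real \<Rightarrow> real" where "psi t = \<kappa> * t / (1 + \<kappa> * t)"
definition phi :: "real \<Rightarrow> real" where "phi y = y / (\<kappa> * (1 - y))"

lemma psi_props:
  assumes "0 \<le> t"
  shows "0 \<le> psi t" "psi t < 1" "psi t / (\<kappa> * (1 - psi t)) = t"
proof -
  have d: "0 < 1 + \<kappa> * t" using assms kpos by (simp add: add_pos_nonneg)
  show "0 \<le> psi t" unfolding psi_def using assms kpos d by simp
  show "psi t < 1" unfolding psi_def using d by simp
  have "1 - psi t = 1 / (1 + \<kappa> * t)" unfolding psi_def using d by (simp add: field_simps)
  moreover have "\<kappa> + \<kappa> * (\<kappa> * t) > 0" using d kpos by (metis mult_pos_pos distrib_left mult_1_right)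
  ultimately show "psi t / (\<kappa> * (1 - psi t)) = t" unfolding psi_def using d kpos by (simp add: field_simps)
qed

lemma phi_gt_iff:
  assumes "0 \<le> t" "0 \<le> y" "y < 1"
  shows "t < phi y \<longleftrightarrow> psi t < y"
proof -
  have d: "0 < 1 + \<kappa> * t" using assms kpos by (simp add: add_pos_nonneg)
  have d2: "0 < \<kappa> * (1 - y)" using assms kpos by simp
  have "t < phi y \<longleftrightarrow> t * (\<kappa> * (1 - y)) < y" unfolding phi_def using d2 by (simp add: pos_less_divide_eq)
  also have "\<dots> \<longleftrightarrow> \<kappa> * t < y * (1 + \<kappa> * t)" by (simp add: algebra_simps)
  also have "\<dots> \<longleftrightarrow> psi t < y" unfolding psi_def using d by (simp add: pos_divide_less_eq mult.commute)
  finally show ?thesis .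
qed

lemma AEY: "AE w in M. Y w < 1"
proof -
  define A where "A = {w \<in> space M. 1 \<le> Y w}"
  have Am: "A \<in> sets M" unfolding A_def by measurable
  have "measure M A \<le> exp (- real n)" for n :: nat
  proof -
    have "A \<subseteq> {w \<in> space M. Y w > psi (real n)}" unfolding A_def using psi_props(2)[of "real n"] by auto
    then have "measure M A \<le> measure M {w \<in> space M. Y w > psi (real n)}"
      by (intro finite_measure_mono) auto
    also have "\<dots> = exp (- real n)" using tail psi_props[of "real n"] by simp
    finally show ?thesis .
  qed
  moreover have "(\<lambda>n::nat. exp (- real n)) \<longlonglongrightarrow> 0" by real_asymp
  ultimately have "measure M A \<le> 0" by (intro LIMSEQ_le_const) auto
  then have "measure M A = 0" using measure_nonneg[of M A] by linarith
  then have "A \<in> null_sets M" using Am by (simp add: emeasure_eq_measure null_sets_def)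
  then show ?thesis by (rule AE_I') (auto simp: A_def)
qed

definition KK :: "real \<Rightarrow> real \<Rightarrow> nat" where "KK c w = nat (\<lceil>phi (Y w) / c\<rceil> - 1)"

lemma KK_meas[measurable]: "KK c \<in> measurable M (count_space UNIV)"
  unfolding KK_def phi_def by measurable

lemma KK_tail:
  assumes c: "0 < c"
  shows "measure M {w \<in> space M. k \<le> KK c w} = exp (- c * real k)"
proof (cases "k = 0")
  case True then show ?thesis using prob_space by simp
next
  case False
  have "measure M {w \<in> space M. k \<le> KK c w} = measure M {w \<in> space M. psi (c * real k) < Y w}"
  proof (rule measure_eq_AE)
    show "AE x in M. (x \<in> {w \<in> space M. k \<le> KK c w}) = (x \<in> {w \<in> space M. psi (c * real k) < Y w})"
      using AEY
    proof eventually_elim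
      case (elim w)
      show ?case
      proof (cases "w \<in> space M")
        case True
        then have y: "0 \<le> Y w" "Y w < 1" using Yr elim by auto
        have "k \<le> KK c w \<longleftrightarrow> int k \<le> \<lceil>phi (Y w) / c\<rceil> - 1"
          unfolding KK_def using False by linarith
        also have "\<dots> \<longleftrightarrow> real k < phi (Y w) / c" by (simp add: less_ceiling_iff)
        also have "\<dots> \<longleftrightarrow> c * real k < phi (Y w)" using c by (simp add: pos_less_divide_eq mult.commute)
        also have "\<dots> \<longleftrightarrow> psi (c * real k) < Y w" by (rule phi_gt_iff) (use c y in auto)
        finally show ?thesis using True by simp
      qed simp
    qed
  qed measurable
  also have "\<dots> = exp (- c * real k)"
    using tail psi_props[of "c * real k"] c by simp
  finally show ?thesis .
qed

lemma KK_distr: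
  assumes c: "0 < c"
  shows "distr M (count_space UNIV) (KK c) = measure_pmf (geometric_pmf (1 - exp (- c)))"
proof (rule measure_eqI_countable)
  show "sets (distr M (count_space UNIV) (KK c)) = Pow UNIV" by simp
  show "sets (measure_pmf (geometric_pmf (1 - exp (- c)))) = Pow UNIV" by simp
  show "countable (UNIV :: nat set)" by simp
  fix k :: nat
  define p where "p = 1 - exp (- c)"
  have p: "0 < p" "p \<le> 1" unfolding p_def using c by auto
  have eq: "{w \<in> space M. KK c w = k} = {w \<in> space M. k \<le> KK c w} - {w \<in> space M. Suc k \<le> KK c w}" by auto
  have "measure M {w \<in> space M. KK c w = k} = exp (- c * real k) - exp (- c * real (Suc k))"
    unfolding eq by (subst finite_measure_Diff) (auto simp: KK_tail[OF c])
  also have "\<dots> = (1 - p) ^ k * p" unfolding p_def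
    by (simp add: exp_of_nat_mult[symmetric] algebra_simps exp_add[symmetric] exp_diff)
  finally have m: "measure M {w \<in> space M. KK c w = k} = (1 - p) ^ k * p" .
  have "emeasure (distr M (count_space UNIV) (KK c)) {k} = emeasure M (KK c -` {k} \<inter> space M)"
    by (rule emeasure_distr) auto
  also have "KK c -` {k} \<inter> space M = {w \<in> space M. KK c w = k}" by auto
  also have "emeasure M \<dots> = ennreal ((1 - p) ^ k * p)" using m by (simp add: emeasure_eq_measure)
  also have "\<dots> = emeasure (measure_pmf (geometric_pmf p)) {k}" using p by (simp add: emeasure_pmf_single)
  finally show "emeasure (distr M (count_space UNIV) (KK c)) {k} = emeasure (measure_pmf (geometric_pmf (1 - exp (- c)))) {k}"
    unfolding p_def .
qed

end



lemma hh_scaled: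
  fixes k n :: real
  assumes n: "2 \<le> n" and k: "0 \<le> k"
  shows "k * (k + 1) / ((k + n) * (k + n - 1)) =
         (k / n) * (k / n + 1 / n) / ((k / n + 1) * (k / n + 1 - 1 / n))"
proof -
  have np: "0 < n" using n by simp
  have "(k / n) * (k / n + 1 / n) = k * (k + 1) / n^2" using np by (simp add: field_simps power2_eq_square)
  moreover have "(k / n + 1) * (k / n + 1 - 1 / n) = (k + n) * (k + n - 1) / n^2"
    using np by (simp add: field_simps power2_eq_square)
  moreover have "0 < (k + n) * (k + n - 1)" using n k by simp
  ultimately show ?thesis using np by simp
qed

definition ccN :: "real \<Rightarrow> nat \<Rightarrow> real" where "ccN \<kappa> N = - ln (1 - 1 / (\<kappa> * real N))"

lemma ccN_pos: "0 < \<kappa> \<Longrightarrow> 1 < \<kappa> * real N \<Longrightarrow> 0 < ccN \<kappa> N"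
  unfolding ccN_def by (simp add: ln_less_zero_iff)

context Ycpl
begin

lemma pointwise_conv:
  assumes y: "0 \<le> y" "y < 1"
  shows "(\<lambda>N. if 2 \<le> N \<and> 1 < \<kappa> * real N then hh N (Suc (nat (\<lceil>phi y / ccN \<kappa> N\<rceil> - 1))) else 0) \<longlonglongrightarrow> y^2"
proof (cases "y = 0")
  case True
  have "phi y = 0" using True by (simp add: phi_def)
  then have "\<And>N. (if 2 \<le> N \<and> 1 < \<kappa> * real N then hh N (Suc (nat (\<lceil>phi y / ccN \<kappa> N\<rceil> - 1))) else 0) = 0"
    by simp
  then show ?thesis using True by simp
next
  case False
  then have yp: "0 < y" using y by simp
  define f where "f = phi y"
  have fp: "0 < f" unfolding f_def phi_def using yp y kpos by simp
  define K where "K = (\<lambda>N. nat (\<lceil>f / ccN \<kappa> N\<rceil> - 1))"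
  define u where "u = (\<lambda>N. real (K N) / real N)"
  have evc: "eventually (\<lambda>N. 2 \<le> N \<and> 1 < \<kappa> * real N) sequentially"
  proof -
    have "filterlim (\<lambda>N. \<kappa> * real N) at_top sequentially" using kpos by real_asymp
    then have "eventually (\<lambda>N. 1 < \<kappa> * real N) sequentially" by (simp add: filterlim_at_top_dense)
    then show ?thesis using eventually_ge_at_top[of 2] by eventually_elim auto
  qed
  have Kb: "eventually (\<lambda>N. f / ccN \<kappa> N - 1 \<le> real (K N) \<and> real (K N) \<le> f / ccN \<kappa> N) sequentially"
    using evc
  proof eventually_elim
    case (elim N)
    have cp: "0 < ccN \<kappa> N" using ccN_pos[OF kpos] elim by simp
    have xp: "0 < f / ccN \<kappa> N" using fp cp by simp
    then have "1 \<le> \<lceil>f / ccN \<kappa> N\<rceil>" by linarith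
    then have "real (K N) = real_of_int \<lceil>f / ccN \<kappa> N\<rceil> - 1" unfolding K_def by simp
    then show ?case by linarith
  qed
  have lim1: "(\<lambda>N. f / (real N * ccN \<kappa> N)) \<longlonglongrightarrow> f * \<kappa>"
    unfolding ccN_def using kpos by real_asymp
  have lim2: "(\<lambda>N. f / (real N * ccN \<kappa> N) - 1 / real N) \<longlonglongrightarrow> f * \<kappa>"
    using tendsto_diff[OF lim1 lim_inverse_n'] by simp
  have ulim: "u \<longlonglongrightarrow> f * \<kappa>"
  proof (rule tendsto_sandwich[OF _ _ lim2 lim1])
    show "eventually (\<lambda>N. f / (real N * ccN \<kappa> N) - 1 / real N \<le> u N) sequentially"
      using Kb evc
    proof eventually_elim
      case (elim N)
      then have "(f / ccN \<kappa> N - 1) / real N \<le> real (K N) / real N" by (intro divide_right_mono) auto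
      then show ?case unfolding u_def by (simp add: diff_divide_distrib mult.commute)
    qed
    show "eventually (\<lambda>N. u N \<le> f / (real N * ccN \<kappa> N)) sequentially"
      using Kb evc
    proof eventually_elim
      case (elim N)
      then have "real (K N) / real N \<le> (f / ccN \<kappa> N) / real N" by (intro divide_right_mono) auto
      then show ?case unfolding u_def by (simp add: mult.commute)
    qed
  qed
  define r where "r = f * \<kappa>"
  have r: "r = y / (1 - y)" unfolding r_def f_def phi_def using kpos y by (simp add: field_simps)
  have r0: "0 \<le> r" unfolding r using y by simp
  have glim: "(\<lambda>N. u N * (u N + 1 / real N) / ((u N + 1) * (u N + 1 - 1 / real N))) \<longlonglongrightarrow> r * (r + 0) / ((r + 1) * (r + 1 - 0))"
    using r0 by (intro tendsto_intros ulim[folded r_def] lim_inverse_n') auto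
  have val: "r * (r + 0) / ((r + 1) * (r + 1 - 0)) = y^2"
  proof -
    have r1: "r + 1 = 1 / (1 - y)" unfolding r using y by (simp add: field_simps)
    have ry: "r / (r + 1) = y" unfolding r1 unfolding r using y by simp
    have "r * (r + 0) / ((r + 1) * (r + 1 - 0)) = (r / (r + 1))^2" by (simp add: power2_eq_square)
    then show ?thesis using ry by simp
  qed
  show ?thesis
  proof (rule Lim_transform_eventually[OF glim[unfolded val]])
    show "eventually (\<lambda>N. u N * (u N + 1 / real N) / ((u N + 1) * (u N + 1 - 1 / real N)) =
        (if 2 \<le> N \<and> 1 < \<kappa> * real N then hh N (Suc (nat (\<lceil>phi y / ccN \<kappa> N\<rceil> - 1))) else 0)) sequentially"
      using evc
    proof eventually_elim
      case (elim N)
      have "hh N (Suc (K N)) = u N * (u N + 1 / real N) / ((u N + 1) * (u N + 1 - 1 / real N))"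
        unfolding hh_Suc u_def by (rule hh_scaled) (use elim in auto)
      then show ?case using elim unfolding K_def f_def by simp
    qed
  qed
qed

end



context Ycpl
begin

interpretation prob_space M by (rule PM)

lemma aN_crit:
  fixes lam T :: "nat \<Rightarrow> real"
  assumes lam_pos: "\<forall>N. 0 < lam N" and T_pos: "\<forall>N. 0 < T N"
    and ev: "\<forall>\<^sub>F N in sequentially. lam N * T N = 1 * ln (\<kappa> * real N)"
  shows "aN lam T \<longlonglongrightarrow> (\<integral>w. (Y w)^2 \<partial>M)"
proof -
  define s where "s = (\<lambda>N w. if 2 \<le> N \<and> 1 < \<kappa> * real N then hh N (Suc (KK (ccN \<kappa> N) w)) else 0)"
  have sm: "s N \<in> borel_measurable M" for N
    unfolding s_def by measurable
  have lim: "(\<lambda>N. integral\<^sup>L M (s N)) \<longlonglongrightarrow> (\<integral>w. (Y w)^2 \<partial>M)"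
  proof (rule integral_dominated_convergence[where w="\<lambda>_. 1"])
    show "(\<lambda>w. (Y w)^2) \<in> borel_measurable M" by measurable
    show "s N \<in> borel_measurable M" for N by (rule sm)
    show "integrable M (\<lambda>_. 1::real)" by simp
    show "AE x in M. (\<lambda>N. s N x) \<longlonglongrightarrow> (Y x)^2"
      using AEY
    proof (rule AE_mp[OF _ AE_I2[OF impI]])
      fix x assume "x \<in> space M" "Y x < 1"
      then have "0 \<le> Y x" "Y x < 1" using Yr by auto
      from pointwise_conv[OF this]
      show "(\<lambda>N. s N x) \<longlonglongrightarrow> (Y x)^2" unfolding s_def KK_def .
    qed
    show "AE x in M. norm (s N x) \<le> 1" for N
      using hh_bounds[of N] unfolding s_def by (auto simp: abs_le_iff intro: order.trans[of _ 0])
  qed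
  have "eventually (\<lambda>N. integral\<^sup>L M (s N) = aN lam T N) sequentially"
  proof -
    have "filterlim (\<lambda>N. \<kappa> * real N) at_top sequentially" using kpos by real_asymp
    then have "eventually (\<lambda>N. 1 < \<kappa> * real N) sequentially" by (simp add: filterlim_at_top_dense)
    then show ?thesis using eventually_ge_at_top[of 2] ev
    proof eventually_elim
      case (elim N)
      have cp: "0 < ccN \<kappa> N" using ccN_pos[OF kpos] elim by simp
      have pe: "exp (- (lam N * T N)) = (\<kappa> * real N) powr (-1)" by (rule p_eq) (use kpos elim in auto)
      have q: "1 - exp (- ccN \<kappa> N) = 1 / (\<kappa> * real N)"
      proof -
        have "0 < 1 - 1 / (\<kappa> * real N)" using elim by simp
        then show ?thesis unfolding ccN_def by simp
      qed
      have pe2: "exp (- (lam N * T N)) = 1 - exp (- ccN \<kappa> N)" unfolding pe q using elim kpos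
        by (simp add: powr_minus field_simps)
      have "aN lam T N = integral\<^sup>L (distr M (count_space UNIV) (KK (ccN \<kappa> N))) (\<lambda>k. hh N (Suc k))"
        unfolding aN_def pe2 KK_distr[OF cp] ..
      also have "\<dots> = (\<integral>w. hh N (Suc (KK (ccN \<kappa> N) w)) \<partial>M)"
        by (rule integral_distr) auto
      also have "\<dots> = integral\<^sup>L M (s N)" unfolding s_def using elim by simp
      finally show ?case ..
    qed
  qed
  with lim show ?thesis by (rule Lim_transform_eventually)
qed

lemma EY2_pos: "0 < (\<integral>w. (Y w)^2 \<partial>M)"
proof -
  define A where "A = {w \<in> space M. 1/2 < Y w}"
  have Am: "A \<in> sets M" unfolding A_def by measurable
  have mA: "measure M A = exp (- (1/2) / (\<kappa> * (1 - 1/2)))" unfolding A_def by (rule tail[rule_format]) simp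
  have "(\<integral>w. (1/4) * indicator A w \<partial>M) \<le> (\<integral>w. (Y w)^2 \<partial>M)"
  proof (rule integral_mono_AE)
    show "integrable M (\<lambda>w. (1/4) * indicator A w :: real)"
      by (rule integrable_const_bound[where B=1]) (use Am in \<open>auto simp: indicator_def\<close>)
    show "integrable M (\<lambda>w. (Y w)^2)"
      by (rule integrable_const_bound[where B=1]) (use Yr in \<open>auto intro!: AE_I2 simp: abs_le_iff power_le_one\<close>)
    show "AE w in M. (1/4) * indicator A w \<le> (Y w)^2"
    proof (rule AE_I2)
      fix w assume w: "w \<in> space M"
      show "(1/4) * indicator A w \<le> (Y w)^2"
      proof (cases "w \<in> A")
        case True
        then have "1/2 \<le> Y w" unfolding A_def by simp
        then have "(1/2)^2 \<le> (Y w)^2" by (intro power_mono) auto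
        then show ?thesis using True by (simp add: power2_eq_square)
      qed simp
    qed
  qed
  moreover have "(\<integral>w. (1/4) * indicator A w \<partial>M) = (1/4) * measure M A" using Am by simp
  moreover have "0 < measure M A" unfolding mA by simp
  ultimately show ?thesis by linarith
qed

end



theorem lemma3p2:
  fixes omega lam T :: "nat \<Rightarrow> real"
  assumes omega_range: "\<forall>N. 0 \<le> omega N \<and> omega N \<le> 1"
    and lam_pos: "\<forall>N. 0 < lam N"
    and T_pos: "\<forall>N. 0 < T N"
    and lim: "(\<lambda>N. real N * omega N) \<longlonglongrightarrow> 0"
  shows "(\<lambda>N. cN omega lam T N) \<longlonglongrightarrow> 0 \<and>
    (\<forall>\<kappa> \<beta>. 0 < \<kappa> \<and> 0 < \<beta> \<and>
        (\<forall>\<^sub>F N in sequentially. lam N * T N = \<beta> * ln (\<kappa> * real N)) \<longrightarrow>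
      (\<beta> > 1 \<longrightarrow> (\<lambda>N. cN omega lam T N) \<sim>[sequentially] (\<lambda>N. real N * omega N)) \<and>
      (\<beta> = 1 \<longrightarrow>
         (\<forall>(M :: real measure) Y. prob_space M \<and> Y \<in> borel_measurable M \<and>
             (\<forall>x\<in>space M. 0 \<le> Y x \<and> Y x \<le> 1) \<and>
             (\<forall>x. 0 \<le> x \<and> x < 1 \<longrightarrow>
                measure M {w \<in> space M. Y w > x} = exp (- x / (\<kappa> * (1 - x)))) \<longrightarrow>
           (\<lambda>N. cN omega lam T N) \<sim>[sequentially]
             (\<lambda>N. real N * omega N * (\<integral>w. (Y w)^2 \<partial>M)))) \<and>
      (\<beta> < 1 \<longrightarrow> (\<lambda>N. cN omega lam T N) \<sim>[sequentially]
             (\<lambda>N. 2 * \<kappa> powr (2 * \<beta>) * omega N * real N powr (2 * \<beta> - 1))))"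
proof -
  note main = cN_main[OF omega_range lim, of lam T]
  have P2: "(\<beta> > 1 \<longrightarrow> (\<lambda>N. cN omega lam T N) \<sim>[sequentially] (\<lambda>N. real N * omega N)) \<and>
      (\<beta> = 1 \<longrightarrow>
         (\<forall>(M :: real measure) Y. prob_space M \<and> Y \<in> borel_measurable M \<and>
             (\<forall>x\<in>space M. 0 \<le> Y x \<and> Y x \<le> 1) \<and>
             (\<forall>x. 0 \<le> x \<and> x < 1 \<longrightarrow>
                measure M {w \<in> space M. Y w > x} = exp (- x / (\<kappa> * (1 - x)))) \<longrightarrow>
           (\<lambda>N. cN omega lam T N) \<sim>[sequentially]
             (\<lambda>N. real N * omega N * (\<integral>w. (Y w)^2 \<partial>M)))) \<and>
      (\<beta> < 1 \<longrightarrow> (\<lambda>N. cN omega lam T N) \<sim>[sequentially]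
             (\<lambda>N. 2 * \<kappa> powr (2 * \<beta>) * omega N * real N powr (2 * \<beta> - 1)))"
    if k: "0 < \<kappa>" and b: "0 < \<beta>" and ev: "\<forall>\<^sub>F N in sequentially. lam N * T N = \<beta> * ln (\<kappa> * real N)"
    for \<kappa> \<beta> :: real
  proof (intro conjI impI allI)
    assume b1: "1 < \<beta>"
    have "aN lam T \<sim>[sequentially] (\<lambda>_. 1)"
      by (rule tendsto_imp_asymp_equiv_const[OF aN_big[OF lam_pos T_pos k b1 ev]]) simp
    then have "(\<lambda>N. real N * omega N * aN lam T N) \<sim>[sequentially] (\<lambda>N. real N * omega N * 1)"
      by (intro asymp_equiv_mult asymp_equiv_refl)
    from asymp_equiv_trans[OF main(2) this]
    show "(\<lambda>N. cN omega lam T N) \<sim>[sequentially] (\<lambda>N. real N * omega N)" by simp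
  next
    fix M :: "real measure" and Y
    assume b1: "\<beta> = 1"
    assume A: "prob_space M \<and> Y \<in> borel_measurable M \<and>
             (\<forall>x\<in>space M. 0 \<le> Y x \<and> Y x \<le> 1) \<and>
             (\<forall>x. 0 \<le> x \<and> x < 1 \<longrightarrow>
                measure M {w \<in> space M. Y w > x} = exp (- x / (\<kappa> * (1 - x))))"
    have loc: "Ycpl M Y \<kappa>" unfolding Ycpl_def using A k by blast
    interpret Ycpl M Y \<kappa> by (rule loc)
    have ev1: "\<forall>\<^sub>F N in sequentially. lam N * T N = 1 * ln (\<kappa> * real N)" using ev b1 by simp
    have "aN lam T \<sim>[sequentially] (\<lambda>_. \<integral>w. (Y w)^2 \<partial>M)"
      by (rule tendsto_imp_asymp_equiv_const[OF aN_crit[OF lam_pos T_pos ev1]]) (use EY2_pos in simp)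
    then have "(\<lambda>N. real N * omega N * aN lam T N) \<sim>[sequentially] (\<lambda>N. real N * omega N * (\<integral>w. (Y w)^2 \<partial>M))"
      by (intro asymp_equiv_mult asymp_equiv_refl)
    from asymp_equiv_trans[OF main(2) this]
    show "(\<lambda>N. cN omega lam T N) \<sim>[sequentially] (\<lambda>N. real N * omega N * (\<integral>w. (Y w)^2 \<partial>M))" .
  next
    assume b1: "\<beta> < 1"
    have "aN lam T \<sim>[sequentially] (\<lambda>N. 2 * \<kappa> powr (2*\<beta>) * real N powr (2*\<beta> - 2))"
      by (rule aN_small[OF lam_pos T_pos k b b1 ev])
    then have 1: "(\<lambda>N. real N * omega N * aN lam T N) \<sim>[sequentially] (\<lambda>N. real N * omega N * (2 * \<kappa> powr (2*\<beta>) * real N powr (2*\<beta> - 2)))"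
      by (intro asymp_equiv_mult asymp_equiv_refl)
    have 2: "(\<lambda>N. real N * omega N * (2 * \<kappa> powr (2*\<beta>) * real N powr (2*\<beta> - 2))) \<sim>[sequentially]
             (\<lambda>N. 2 * \<kappa> powr (2 * \<beta>) * omega N * real N powr (2 * \<beta> - 1))"
    proof (rule asymp_equiv_refl_ev, rule always_eventually, rule allI)
      fix N :: nat
      have "real N powr (2 * \<beta> - 1) = real N powr (1 + (2 * \<beta> - 2))" by simp
      also have "\<dots> = real N powr 1 * real N powr (2 * \<beta> - 2)" by (rule powr_add)
      also have "\<dots> = real N * real N powr (2 * \<beta> - 2)" by simp
      finally have e: "real N powr (2 * \<beta> - 1) = real N * real N powr (2 * \<beta> - 2)" .
      show "real N * omega N * (2 * \<kappa> powr (2*\<beta>) * real N powr (2*\<beta> - 2)) =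
               2 * \<kappa> powr (2 * \<beta>) * omega N * real N powr (2 * \<beta> - 1)"
        unfolding e by (simp only: mult_ac)
    qed
    from asymp_equiv_trans[OF asymp_equiv_trans[OF main(2) 1] 2]
    show "(\<lambda>N. cN omega lam T N) \<sim>[sequentially] (\<lambda>N. 2 * \<kappa> powr (2 * \<beta>) * omega N * real N powr (2 * \<beta> - 1))" .
  qed
  show ?thesis using main(1) P2 by blast
qed



end
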